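(* Let $E$ be a real affine space of dimension $n$ with a system of coordinates $\mathcal L=(\ell_1,\dots,\ell_n)$. Every $\mu\in\mathcal M^*(E)$ has at most one center with respect to $\mathcal L$. Moreover, for $1\le k\le n$, the first $k$ coordinates of the center depend only on the restriction of $\mu$ to $\mathcal B_E(\ell_1,\dots,\ell_k)$: if $\mu,\nu\in\mathcal M^*(E)$ satisfy $\mu(A)=\nu(A)$ for all $A\in\mathcal B_E(\ell_1,\dots,\ell_k)$, and $x$, $y$ are centers with respect to $\mathcal L$ of $\mu$ and $\nu$ respectively, then $(x_1,\dots,x_k)=(y_1,\dots,y_k)$.
   Context: $\vec E$ is the vector space of $E$. A partition of $E$ is a collection of subsets covering $E$ whose distinct members have disjoint interiors. Yao-Yao partitions and their centers are defined by induction on dimension: if $E=\{x\}$, the Yao-Yao partition is $\{\{x\}\}$, with center $x$; if $\dim E=n\ge1$, $\mathcal P$ is a Yao-Yao partition of $E$ with center $x$ if there exist an affine hyperplane $F$, a vector $v\in\vec E\setminus\vec F$ and two Yao-Yao partitions $\mathcal P_1,\mathcal P_{-1}$ of $F$ with the same center $x$ such that $\mathcal P=\{A+\mathbb R_-v: A\in\mathcal P_{-1}\}\cup\{A+\mathbb R_+v: A\in\mathcal P_1\}$. A system of coordinates is a family $(\ell_1,\dots,\ell_n)$ of affine forms such that $x\mapsto(\ell_i(x))_i$ is a bijection $E\to\mathbb R^n$; write $x_i=\ell_i(x)$. Such a partition, given by $F,v,x,\mathcal P_1,\mathcal P_{-1}$, is adapted to $(\ell_1,\dots,\ell_n)$ if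 $F=\{z: z_1=x_1\}$ and $\mathcal P_1,\mathcal P_{-1}$ are adapted to $(\ell_2|_F,\dots,\ell_n|_F)$ (in dimension $0$ every Yao-Yao partition is adapted). $\mathcal M(E)$ is the set of finite non-negative Borel measures on $E$ vanishing on every affine hyperplane; $\mathcal M^*(E)$ is the set of $\mu\in\mathcal M(E)$ with $\mu(U)>0$ for every nonempty open set $U$. A Yao-Yao equipartition for $\mu$ is a Yao-Yao partition $\mathcal P$ with $\mu(A)=2^{-n}\mu(E)$ for all $A\in\mathcal P$. A center of $\mu$ with respect to $\mathcal L$ is the center of a Yao-Yao equipartition for $\mu$ adapted to $\mathcal L$. $\mathcal B_E(\ell_1,\dots,\ell_k)$ is the smallest $\sigma$-algebra of subsets of $E$ making $\ell_1,\dots,\ell_k$ measurable. *)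

theory Defs
  imports "HOL-Analysis.Analysis"
begin

text \<open>The ambient real affine space E is modelled as a Euclidean-space type 'a
  (any finite-dimensional real affine space is isomorphic to one); dim E = DIM('a).\<close>

definition affine_form :: "('a::euclidean_space \<Rightarrow> real) \<Rightarrow> bool" where
  "affine_form l \<longleftrightarrow> (\<exists>f c. linear f \<and> l = (\<lambda>z. f z + c))"

definition coord_system :: "('a::euclidean_space \<Rightarrow> real) list \<Rightarrow> bool" where
  "coord_system L \<longleftrightarrow> length L = DIM('a) \<and> (\<forall>l\<in>set L. affine_form l) \<and>
     bij_betw (\<lambda>z. map (\<lambda>l. l z) L) UNIV {xs. length xs = DIM('a)}"

definition ray_plus :: "'a::real_vector set \<Rightarrow> 'a \<Rightarrow> 'a set" where
  "ray_plus A v = {a + t *\<^sub>R v | a t. a \<in> A \<and> t \<ge> 0}"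

definition ray_minus :: "'a::real_vector set \<Rightarrow> 'a \<Rightarrow> 'a set" where
  "ray_minus A v = {a + t *\<^sub>R v | a t. a \<in> A \<and> t \<le> 0}"

text \<open>At each step the hyperplane is
  F = {z \<in> S. l_1 z = l_1 x}, v is a vector of the direction of S not in the direction
  of F (i.e. x + v \<in> S and l_1 (x + v) \<noteq> l_1 x), and the two sub-partitions of F
  are adapted to the restrictions of (l_2,...,l_n) to F.\<close>
inductive yy_adapted :: "'a::euclidean_space set \<Rightarrow> ('a \<Rightarrow> real) list \<Rightarrow> 'a set set \<Rightarrow> 'a \<Rightarrow> bool"
where
  base: "yy_adapted {x} [] {{x}} x"
| step: "\<lbrakk> F = {z \<in> S. l z = l x}; x + v \<in> S; l (x + v) \<noteq> l x;
           yy_adapted F L P1 x; yy_adapted F L Pm1 x;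
           P = {ray_minus A v | A. A \<in> Pm1} \<union> {ray_plus A v | A. A \<in> P1} \<rbrakk>
         \<Longrightarrow> yy_adapted S (l # L) P x"

definition meas_M :: "'a::euclidean_space measure set" where
  "meas_M = {\<mu>. sets \<mu> = sets borel \<and> finite_measure \<mu> \<and>
      (\<forall>a b. a \<noteq> 0 \<longrightarrow> emeasure \<mu> {z. a \<bullet> z = b} = 0)}"

definition meas_Mstar :: "'a::euclidean_space measure set" where
  "meas_Mstar = {\<mu>\<in>meas_M. \<forall>U. open U \<and> U \<noteq> {} \<longrightarrow> emeasure \<mu> U > 0}"

definition yy_equipartition :: "'a::euclidean_space measure \<Rightarrow> 'a set set \<Rightarrow> bool" where
  "yy_equipartition \<mu> P \<longleftrightarrow>
     (\<forall>A\<in>P. emeasure \<mu> A = emeasure \<mu> UNIV / 2 ^ DIM('a))"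

definition yy_center :: "'a::euclidean_space measure \<Rightarrow> ('a \<Rightarrow> real) list \<Rightarrow> 'a \<Rightarrow> bool" where
  "yy_center \<mu> L x \<longleftrightarrow> (\<exists>P. yy_adapted UNIV L P x \<and> yy_equipartition \<mu> P)"

definition coord_sigma :: "('a \<Rightarrow> real) list \<Rightarrow> nat \<Rightarrow> 'a set set" where
  "coord_sigma L k = sigma_sets UNIV {(L ! i) -` B | i B. i < k \<and> B \<in> sets borel}"

end

theory Submission
  imports Defs
begin


definition lin :: "('a::real_vector \<Rightarrow> real) \<Rightarrow> 'a \<Rightarrow> real" where
  "lin l = (\<lambda>z. l z - l 0)"

lemma affine_lin:
  assumes "affine_form l"
  shows "linear (lin l)" "\<And>z. l z = lin l z + l 0" "\<And>a b. l (a + b) = l a + lin l b"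
    "\<And>a b. l a - l b = lin l (a - b)"
proof -
  obtain f c where f: "linear f" "l = (\<lambda>z. f z + c)" using assms unfolding affine_form_def by blast
  have e: "lin l = f" using f by (auto simp: lin_def linear_0)
  show "linear (lin l)" using e f by simp
  show "\<And>z. l z = lin l z + l 0" using e f by (simp add: linear_0)
  show "\<And>a b. l (a + b) = l a + lin l b" using e f by (simp add: linear_add)
  show "\<And>a b. l a - l b = lin l (a - b)" using e f by (simp add: linear_diff)
qed

definition sg :: "bool \<Rightarrow> real \<Rightarrow> bool" where "sg b t = (if b then 0 \<le> t else t \<le> 0)"
definition ssg :: "bool \<Rightarrow> real \<Rightarrow> bool" where "ssg b t = (if b then 0 < t else t < 0)"

primrec R :: "('a::real_vector \<Rightarrow> real) list \<Rightarrow> (bool list \<Rightarrow> 'a) \<Rightarrow> bool list \<Rightarrow> nat \<Rightarrow> 'a \<Rightarrow> 'a" where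
  "R fs vt \<sigma> 0 h = h"
| "R fs vt \<sigma> (Suc i) h = R fs vt \<sigma> i h - ((fs!i) (R fs vt \<sigma> i h) / (fs!i) (vt (take i \<sigma>))) *\<^sub>R vt (take i \<sigma>)"

definition C :: "('a::real_vector \<Rightarrow> real) list \<Rightarrow> (bool list \<Rightarrow> 'a) \<Rightarrow> bool list \<Rightarrow> nat \<Rightarrow> 'a \<Rightarrow> real" where
  "C fs vt \<sigma> i h = (fs!i) (R fs vt \<sigma> i h) / (fs!i) (vt (take i \<sigma>))"

lemma R_Suc: "R fs vt \<sigma> (Suc i) h = R fs vt \<sigma> i h - C fs vt \<sigma> i h *\<^sub>R vt (take i \<sigma>)"
  by (simp add: C_def)

lemma R_take: "take i \<sigma> = take i \<sigma>' \<Longrightarrow> R fs vt \<sigma> i h = R fs vt \<sigma>' i h"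
proof (induction i)
  case (Suc i)
  have "take i \<sigma> = take i \<sigma>'" using Suc.prems by (metis min.cobounded1 take_take le_SucI order_refl min_absorb1)
  then show ?case using Suc by simp
qed simp

lemma C_take: "take i \<sigma> = take i \<sigma>' \<Longrightarrow> C fs vt \<sigma> i h = C fs vt \<sigma>' i h"
  unfolding C_def using R_take by metis

lemma C_snoc: "i \<le> length \<sigma> \<Longrightarrow> C fs vt (\<sigma>@[b]) i h = C fs vt \<sigma> i h"
  by (rule C_take) simp

lemma R_snoc: "i \<le> length \<sigma> \<Longrightarrow> R fs vt (\<sigma>@[b]) i h = R fs vt \<sigma> i h"
  by (rule R_take) simp

lemma R_lin:
  assumes "\<forall>f\<in>set fs. linear f" "i \<le> length fs"
  shows "linear (R fs vt \<sigma> i)"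
  using assms(2)
proof (induction i)
  case 0 show ?case by (simp add: linear_id[unfolded id_def])
next
  case (Suc i)
  let ?v = "vt (take i \<sigma>)"
  have IH: "linear (R fs vt \<sigma> i)" using Suc by simp
  have lf: "linear (fs!i)" using assms Suc.prems by simp
  show ?case
  proof (rule linearI)
    fix a b
    show "R fs vt \<sigma> (Suc i) (a + b) = R fs vt \<sigma> (Suc i) a + R fs vt \<sigma> (Suc i) b"
      using linear_add[OF IH] linear_add[OF lf] by (simp add: add_divide_distrib scaleR_add_left)
  next
    fix c a
    show "R fs vt \<sigma> (Suc i) (c *\<^sub>R a) = c *\<^sub>R R fs vt \<sigma> (Suc i) a"
      using linear_scale[OF IH] linear_scale[OF lf] by (simp add: scaleR_diff_right)
  qed
qed

lemma C_lin:
  assumes "\<forall>f\<in>set fs. linear f" "i < length fs"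
  shows "linear (C fs vt \<sigma> i)"
proof -
  have IH: "linear (R fs vt \<sigma> i)" using assms by (intro R_lin) auto
  have lf: "linear (fs!i)" using assms by simp
  show ?thesis
  proof (rule linearI)
    fix a b show "C fs vt \<sigma> i (a + b) = C fs vt \<sigma> i a + C fs vt \<sigma> i b"
      unfolding C_def using linear_add[OF IH] linear_add[OF lf] by (simp add: add_divide_distrib)
  next
    fix c a show "C fs vt \<sigma> i (c *\<^sub>R a) = c *\<^sub>R C fs vt \<sigma> i a"
      unfolding C_def using linear_scale[OF IH] linear_scale[OF lf] by simp
  qed
qed

lemma R_V:
  assumes "\<forall>j<m. (fs!j) h = 0" "i \<le> m"
  shows "R fs vt \<sigma> i h = h"
  using assms(2) by (induction i) (use assms(1) in auto)

lemma C_V: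
  assumes "\<forall>j<m. (fs!j) h = 0" "i < m"
  shows "C fs vt \<sigma> i h = 0"
  using R_V[OF assms(1), of i] assms by (simp add: C_def)

lemma C_self:
  assumes "\<forall>j<length \<sigma>. (fs!j) (vt \<sigma>) = 0" "(fs!length \<sigma>) (vt \<sigma>) \<noteq> 0"
  shows "C fs vt \<sigma> (length \<sigma>) (vt \<sigma>) = 1"
  using R_V[OF assms(1), of "length \<sigma>"] assms(2) by (simp add: C_def)

lemma R_decomp: "R fs vt \<sigma> i h = h - (\<Sum>j<i. C fs vt \<sigma> j h *\<^sub>R vt (take j \<sigma>))"
  by (induction i) (simp_all add: R_Suc del: R.simps(2))

lemma R_shift:
  assumes "\<forall>f\<in>set fs. linear f" "m \<le> length fs" "\<forall>j<m. (fs!j) h = 0" "i \<le> m"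
  shows "R fs vt \<sigma> i (a + h) = R fs vt \<sigma> i a + h"
proof -
  have "linear (R fs vt \<sigma> i)" using assms by (intro R_lin) auto
  then show ?thesis using R_V[OF assms(3,4)] by (simp add: linear_add)
qed

lemma C_shift:
  assumes "\<forall>f\<in>set fs. linear f" "m \<le> length fs" "\<forall>j<m. (fs!j) h = 0" "i < m"
  shows "C fs vt \<sigma> i (a + h) = C fs vt \<sigma> i a"
proof -
  have "linear (C fs vt \<sigma> i)" using assms by (intro C_lin) auto
  then show ?thesis using C_V[OF assms(3,4)] by (simp add: linear_add)
qed

definition yc :: "('a::real_vector \<Rightarrow> real) list \<Rightarrow> (bool list \<Rightarrow> 'a) \<Rightarrow> 'a \<Rightarrow> bool list \<Rightarrow> 'a set" where
  "yc fs vt x \<sigma> = {z. \<forall>i<length \<sigma>. sg (\<sigma>!i) (C fs vt \<sigma> i (z - x))}"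

definition ysc :: "('a::real_vector \<Rightarrow> real) list \<Rightarrow> (bool list \<Rightarrow> 'a) \<Rightarrow> 'a \<Rightarrow> bool list \<Rightarrow> 'a set" where
  "ysc fs vt x \<sigma> = {z. \<forall>i<length \<sigma>. ssg (\<sigma>!i) (C fs vt \<sigma> i (z - x))}"

lemma yc_snoc: "yc fs vt x (\<sigma>@[b]) = yc fs vt x \<sigma> \<inter> {z. sg b (C fs vt \<sigma> (length \<sigma>) (z - x))}"
  unfolding yc_def by (auto simp: C_snoc nth_append less_Suc_eq)

lemma ysc_snoc: "ysc fs vt x (\<sigma>@[b]) = ysc fs vt x \<sigma> \<inter> {z. ssg b (C fs vt \<sigma> (length \<sigma>) (z - x))}"
  unfolding ysc_def by (auto simp: C_snoc nth_append less_Suc_eq)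

lemma ysc_sub: "ysc fs vt x \<sigma> \<subseteq> yc fs vt x \<sigma>"
  unfolding yc_def ysc_def sg_def ssg_def by (force split: if_splits)

lemma yc_shift:
  assumes "\<forall>f\<in>set fs. linear f" "length \<sigma> \<le> length fs" "\<forall>j<length \<sigma>. (fs!j) h = 0"
  shows "z \<in> yc fs vt x \<sigma> \<longleftrightarrow> z + h \<in> yc fs vt x \<sigma>"
    "z \<in> ysc fs vt x \<sigma> \<longleftrightarrow> z + h \<in> ysc fs vt x \<sigma>"
proof -
  have "\<And>i. i < length \<sigma> \<Longrightarrow> C fs vt \<sigma> i (z + h - x) = C fs vt \<sigma> i (z - x)"
    using C_shift[OF assms(1,2,3)] by (metis add.commute add_diff_eq)
  then show "z \<in> yc fs vt x \<sigma> \<longleftrightarrow> z + h \<in> yc fs vt x \<sigma>"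
    "z \<in> ysc fs vt x \<sigma> \<longleftrightarrow> z + h \<in> ysc fs vt x \<sigma>"
    unfolding yc_def ysc_def by auto
qed


definition tcons :: "'a \<Rightarrow> (bool list \<Rightarrow> 'a) \<Rightarrow> (bool list \<Rightarrow> 'a) \<Rightarrow> bool list \<Rightarrow> 'a" where
  "tcons v vt1 vtm1 = (\<lambda>\<sigma>. case \<sigma> of [] \<Rightarrow> v | b#\<sigma>' \<Rightarrow> (if b then vt1 \<sigma>' else vtm1 \<sigma>'))"

lemma R_cons: "R (f#fs) (tcons v vt1 vtm1) (b#\<sigma>) (Suc i) h
   = R fs (if b then vt1 else vtm1) \<sigma> i (h - (f h / f v) *\<^sub>R v)"
  by (induction i) (simp_all add: tcons_def)

lemma C_cons0: "C (f#fs) (tcons v vt1 vtm1) (b#\<sigma>) 0 h = f h / f v"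
  by (simp add: C_def tcons_def)

lemma C_cons: "C (f#fs) (tcons v vt1 vtm1) (b#\<sigma>) (Suc i) h
   = C fs (if b then vt1 else vtm1) \<sigma> i (h - (f h / f v) *\<^sub>R v)"
  unfolding C_def using R_cons[of f fs v vt1 vtm1 b \<sigma> i h] by (simp add: tcons_def)

lemma ray_piece:
  assumes S: "S = {z. \<forall>l'\<in>set L0. l' z = l' x}" and aff: "\<forall>l'\<in>set (l#L0). affine_form l'"
    and v0: "\<forall>l'\<in>set L0. lin l' v = 0" and vl: "lin l v \<noteq> 0" and F: "F = {z\<in>S. l z = l x}"
  shows "ray_plus {a\<in>F. Q (a - x)} v = {z\<in>S. sg True (lin l (z - x) / lin l v) \<and> Q (z - x - (lin l (z - x) / lin l v) *\<^sub>R v)}"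
    "ray_minus {a\<in>F. Q (a - x)} v = {z\<in>S. sg False (lin l (z - x) / lin l v) \<and> Q (z - x - (lin l (z - x) / lin l v) *\<^sub>R v)}"
proof -
  have al: "affine_form l" using aff by simp
  have Sadd: "a + t *\<^sub>R v \<in> S \<longleftrightarrow> a \<in> S" for a t
  proof -
    have "l' (a + t *\<^sub>R v) = l' a" if "l' \<in> set L0" for l'
      using affine_lin(3)[of l' a "t *\<^sub>R v"] affine_lin(1)[of l'] aff v0 that
      by (simp add: linear_scale)
    then show ?thesis using S by auto (metis, metis)
  qed
  have key: "lin l (a + t *\<^sub>R v - x) / lin l v = t" if "l a = l x" for a t
  proof -
    have e: "a + t *\<^sub>R v - x = (a - x) + t *\<^sub>R v" by (simp add: algebra_simps)
    have "lin l (a + t *\<^sub>R v - x) = lin l (a - x) + t * lin l v"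
      unfolding e using affine_lin(1)[OF al] by (simp add: linear_add linear_scale)
    moreover have "lin l (a - x) = 0" using affine_lin(4)[OF al, of a x] that by simp
    ultimately show ?thesis using vl by simp
  qed
  have bck: "l (z - (lin l (z - x) / lin l v) *\<^sub>R v) = l x" for z
  proof -
    have "l (z - (lin l (z - x) / lin l v) *\<^sub>R v) = l z - lin l (z - x)"
      using affine_lin(3)[OF al, of z "- (lin l (z - x) / lin l v) *\<^sub>R v"] affine_lin(1)[OF al] vl
      by (simp add: linear_scale linear_neg)
    then show ?thesis using affine_lin(4)[OF al, of z x] by simp
  qed
  show "ray_plus {a\<in>F. Q (a - x)} v = {z\<in>S. sg True (lin l (z - x) / lin l v) \<and> Q (z - x - (lin l (z - x) / lin l v) *\<^sub>R v)}"
  proof (intro set_eqI iffI)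
    fix z assume "z \<in> ray_plus {a\<in>F. Q (a - x)} v"
    then obtain a t where z: "z = a + t *\<^sub>R v" "a \<in> F" "Q (a - x)" "t \<ge> 0" unfolding ray_plus_def by auto
    have "lin l (z - x) / lin l v = t" using key z F by auto
    then show "z \<in> {z\<in>S. sg True (lin l (z - x) / lin l v) \<and> Q (z - x - (lin l (z - x) / lin l v) *\<^sub>R v)}"
      using z Sadd F by (auto simp: sg_def)
  next
    fix z assume z: "z \<in> {z\<in>S. sg True (lin l (z - x) / lin l v) \<and> Q (z - x - (lin l (z - x) / lin l v) *\<^sub>R v)}"
    let ?t = "lin l (z - x) / lin l v"
    have "z - ?t *\<^sub>R v \<in> F" using z Sadd[of "z - ?t *\<^sub>R v" ?t] bck F by auto
    moreover have "z = (z - ?t *\<^sub>R v) + ?t *\<^sub>R v" by simp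
    moreover have "z - ?t *\<^sub>R v - x = z - x - ?t *\<^sub>R v" by (simp add: algebra_simps)
    ultimately show "z \<in> ray_plus {a\<in>F. Q (a - x)} v" using z unfolding ray_plus_def sg_def
      by (intro CollectI exI[of _ "z - ?t *\<^sub>R v"] exI[of _ ?t]) (auto simp: algebra_simps)
  qed
  show "ray_minus {a\<in>F. Q (a - x)} v = {z\<in>S. sg False (lin l (z - x) / lin l v) \<and> Q (z - x - (lin l (z - x) / lin l v) *\<^sub>R v)}"
  proof (intro set_eqI iffI)
    fix z assume "z \<in> ray_minus {a\<in>F. Q (a - x)} v"
    then obtain a t where z: "z = a + t *\<^sub>R v" "a \<in> F" "Q (a - x)" "t \<le> 0" unfolding ray_minus_def by auto
    have "lin l (z - x) / lin l v = t" using key z F by auto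
    then show "z \<in> {z\<in>S. sg False (lin l (z - x) / lin l v) \<and> Q (z - x - (lin l (z - x) / lin l v) *\<^sub>R v)}"
      using z Sadd F by (auto simp: sg_def)
  next
    fix z assume z: "z \<in> {z\<in>S. sg False (lin l (z - x) / lin l v) \<and> Q (z - x - (lin l (z - x) / lin l v) *\<^sub>R v)}"
    let ?t = "lin l (z - x) / lin l v"
    have "z - ?t *\<^sub>R v \<in> F" using z Sadd[of "z - ?t *\<^sub>R v" ?t] bck F by auto
    moreover have "z = (z - ?t *\<^sub>R v) + ?t *\<^sub>R v" by simp
    moreover have "z - ?t *\<^sub>R v - x = z - x - ?t *\<^sub>R v" by (simp add: algebra_simps)
    ultimately show "z \<in> ray_minus {a\<in>F. Q (a - x)} v" using z unfolding ray_minus_def sg_def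
      by (intro CollectI exI[of _ "z - ?t *\<^sub>R v"] exI[of _ ?t]) (auto simp: algebra_simps)
  qed
qed


definition piece :: "'a set \<Rightarrow> ('a::real_vector \<Rightarrow> real) list \<Rightarrow> (bool list \<Rightarrow> 'a) \<Rightarrow> 'a \<Rightarrow> bool list \<Rightarrow> 'a set" where
  "piece S fs vt x \<sigma> = {z\<in>S. \<forall>i<length \<sigma>. sg (\<sigma>!i) (C fs vt \<sigma> i (z - x))}"

lemma yy_struct:
  assumes "yy_adapted S L P x" "S = {z. \<forall>l\<in>set L0. l z = l x}" "\<forall>l\<in>set (L0@L). affine_form l"
    "\<forall>z. (\<forall>l\<in>set (L0@L). l z = l x) \<longrightarrow> z = x"
  shows "\<exists>vt. P = piece S (map lin L) vt x ` {\<sigma>. length \<sigma> = length L} \<and>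
     (\<forall>\<sigma>. length \<sigma> < length L \<longrightarrow> (\<forall>l\<in>set L0. lin l (vt \<sigma>) = 0) \<and>
        (\<forall>i<length \<sigma>. lin (L!i) (vt \<sigma>) = 0) \<and> lin (L!length \<sigma>) (vt \<sigma>) \<noteq> 0)"
  using assms
proof (induction arbitrary: L0 rule: yy_adapted.induct)
  case (base x)
  have "{\<sigma>::bool list. length \<sigma> = 0} = {[]}" by auto
  then show ?case by (auto simp: piece_def)
next
  case (step F S l x v L P1 Pm1 P)
  have F: "F = {z. \<forall>l'\<in>set (L0@[l]). l' z = l' x}" using step.hyps(1) step.prems(1) by auto
  have aff: "\<forall>l'\<in>set ((L0@[l])@L). affine_form l'" using step.prems(2) by auto
  have inj: "\<forall>z. (\<forall>l'\<in>set ((L0@[l])@L). l' z = l' x) \<longrightarrow> z = x" using step.prems(3) by auto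
  obtain vt1 where vt1: "P1 = piece F (map lin L) vt1 x ` {\<sigma>. length \<sigma> = length L}"
    "\<forall>\<sigma>. length \<sigma> < length L \<longrightarrow> (\<forall>l'\<in>set (L0@[l]). lin l' (vt1 \<sigma>) = 0) \<and>
        (\<forall>i<length \<sigma>. lin (L!i) (vt1 \<sigma>) = 0) \<and> lin (L!length \<sigma>) (vt1 \<sigma>) \<noteq> 0"
    using step.IH(1)[OF F aff inj] by blast
  obtain vtm1 where vtm1: "Pm1 = piece F (map lin L) vtm1 x ` {\<sigma>. length \<sigma> = length L}"
    "\<forall>\<sigma>. length \<sigma> < length L \<longrightarrow> (\<forall>l'\<in>set (L0@[l]). lin l' (vtm1 \<sigma>) = 0) \<and>
        (\<forall>i<length \<sigma>. lin (L!i) (vtm1 \<sigma>) = 0) \<and> lin (L!length \<sigma>) (vtm1 \<sigma>) \<noteq> 0"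
    using step.IH(2)[OF F aff inj] by blast
  define vt where "vt = tcons v vt1 vtm1"
  have al: "affine_form l" and aL0: "\<forall>l'\<in>set L0. affine_form l'" using step.prems(2) by auto
  have v0: "\<forall>l'\<in>set L0. lin l' v = 0"
  proof
    fix l' assume "l' \<in> set L0"
    then have "l' (x + v) = l' x" "affine_form l'" using step.hyps(2) step.prems(1,2) by auto
    then show "lin l' v = 0" using affine_lin(3)[of l' x v] by simp
  qed
  have vl: "lin l v \<noteq> 0" using step.hyps(3) affine_lin(3)[OF al, of x v] by simp
  have affl: "\<forall>l'\<in>set (l#L0). affine_form l'" using al aL0 by simp
  note rp = ray_piece[OF step.prems(1) affl v0 vl step.hyps(1)]
  have pc: "piece S (map lin (l#L)) vt x (b#\<sigma>) =
     (if b then ray_plus else ray_minus) (piece F (map lin L) (if b then vt1 else vtm1) x \<sigma>) v" for b \<sigma>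
  proof -
    have "piece F (map lin L) (if b then vt1 else vtm1) x \<sigma> =
      {a\<in>F. (\<lambda>h. \<forall>i<length \<sigma>. sg (\<sigma>!i) (C (map lin L) (if b then vt1 else vtm1) \<sigma> i h)) (a - x)}"
      unfolding piece_def by simp
    then show ?thesis
      unfolding vt_def piece_def using rp[where Q="\<lambda>h. \<forall>i<length \<sigma>. sg (\<sigma>!i) (C (map lin L) (if b then vt1 else vtm1) \<sigma> i h)"]
      by (cases b) (simp_all add: All_less_Suc2 C_cons0 C_cons algebra_simps)
  qed
  have lens: "{\<sigma>. length \<sigma> = length (l#L)} = (\<lambda>\<sigma>. False#\<sigma>) ` {\<sigma>. length \<sigma> = length L} \<union> (\<lambda>\<sigma>. True#\<sigma>) ` {\<sigma>. length \<sigma> = length L}"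
    by (auto simp: length_Suc_conv)
  have "P = piece S (map lin (l#L)) vt x ` {\<sigma>. length \<sigma> = length (l#L)}"
    unfolding lens image_Un image_image step.hyps(6) pc vt1(1) vtm1(1) by auto
  moreover have "\<forall>\<sigma>. length \<sigma> < length (l#L) \<longrightarrow> (\<forall>l'\<in>set L0. lin l' (vt \<sigma>) = 0) \<and>
        (\<forall>i<length \<sigma>. lin ((l#L)!i) (vt \<sigma>) = 0) \<and> lin ((l#L)!length \<sigma>) (vt \<sigma>) \<noteq> 0"
  proof (intro allI impI)
    fix \<sigma> :: "bool list" assume len: "length \<sigma> < length (l#L)"
    show "(\<forall>l'\<in>set L0. lin l' (vt \<sigma>) = 0) \<and>
        (\<forall>i<length \<sigma>. lin ((l#L)!i) (vt \<sigma>) = 0) \<and> lin ((l#L)!length \<sigma>) (vt \<sigma>) \<noteq> 0"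
    proof (cases \<sigma>)
      case Nil then show ?thesis using v0 vl by (simp add: vt_def tcons_def)
    next
      case (Cons b \<sigma>')
      then have "length \<sigma>' < length L" using len by simp
      then show ?thesis using vt1(2) vtm1(2) Cons
        by (cases b) (auto simp: vt_def tcons_def All_less_Suc2)
    qed
  qed
  ultimately show ?case by blast
qed



definition tree_ok :: "('a::real_vector \<Rightarrow> real) list \<Rightarrow> (bool list \<Rightarrow> 'a) \<Rightarrow> bool" where
  "tree_ok fs vt \<longleftrightarrow> (\<forall>\<sigma>. length \<sigma> < length fs \<longrightarrow> (\<forall>i<length \<sigma>. (fs!i) (vt \<sigma>) = 0) \<and> (fs!length \<sigma>) (vt \<sigma>) \<noteq> 0)"

definition rp :: "('a::real_vector \<Rightarrow> real) list \<Rightarrow> (bool list \<Rightarrow> 'a) \<Rightarrow> 'a \<Rightarrow> bool list \<Rightarrow> 'a \<Rightarrow> 'a" where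
  "rp fs vt x \<sigma> z = R fs vt \<sigma> (length \<sigma>) (z - x)"

lemma lin_repr:
  fixes \<phi> :: "'a::euclidean_space \<Rightarrow> real"
  assumes "linear \<phi>"
  shows "\<phi> z = (\<Sum>b\<in>Basis. \<phi> b *\<^sub>R b) \<bullet> z"
proof -
  have "\<phi> z = \<phi> (\<Sum>b\<in>Basis. (z \<bullet> b) *\<^sub>R b)" by (simp add: euclidean_representation)
  also have "\<dots> = (\<Sum>b\<in>Basis. (z \<bullet> b) * \<phi> b)" using assms by (simp add: linear_sum linear_scale)
  also have "\<dots> = (\<Sum>b\<in>Basis. \<phi> b *\<^sub>R b) \<bullet> z" by (simp add: inner_sum_right inner_commute mult.commute)
  finally show ?thesis .
qed
lemma C_cont:
  fixes fs :: "('a::euclidean_space \<Rightarrow> real) list"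
  assumes "\<forall>f\<in>set fs. linear f" "i < length fs"
  shows "continuous_on UNIV (\<lambda>z. C fs vt \<sigma> i (z - x))"
proof -
  have "linear (C fs vt \<sigma> i)" using assms by (rule C_lin)
  then have c: "continuous_on UNIV (C fs vt \<sigma> i)" by (simp add: linear_conv_bounded_linear linear_continuous_on)
  have e:  "(\<lambda>z. C fs vt \<sigma> i (z - x)) = (\<lambda>z. C fs vt \<sigma> i z - C fs vt \<sigma> i x)"
    using \<open>linear (C fs vt \<sigma> i)\<close> by (simp add: linear_diff)
  have "continuous_on UNIV (\<lambda>z. C fs vt \<sigma> i z - C fs vt \<sigma> i x)"
    by (rule continuous_on_diff[OF c continuous_on_const])
  then show ?thesis unfolding e .
qed
lemma ysc_open:
  fixes fs :: "('a::euclidean_space \<Rightarrow> real) list"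
  assumes "\<forall>f\<in>set fs. linear f" "length \<sigma> \<le> length fs"
  shows "open (ysc fs vt x \<sigma>)"
proof -
  have e: "ysc fs vt x \<sigma> = (\<Inter>i\<in>{..<length \<sigma>}. {z. ssg (\<sigma>!i) (C fs vt \<sigma> i (z - x))})"
    unfolding ysc_def by auto
  have "open {z. ssg (\<sigma>!i) (C fs vt \<sigma> i (z - x))}" if "i < length \<sigma>" for i
  proof -
    have c: "continuous_on UNIV (\<lambda>z. C fs vt \<sigma> i (z - x))" using that assms by (intro C_cont) auto
    show ?thesis
    proof (cases "\<sigma>!i")
      case True then show ?thesis unfolding ssg_def
        using open_Collect_less[OF continuous_on_const c, of 0] by simp
    next
      case False then show ?thesis unfolding ssg_def
        using open_Collect_less[OF c continuous_on_const, of 0] by simp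
    qed
  qed
  then have "\<forall>i\<in>{..<length \<sigma>}. open {z. ssg (\<sigma>!i) (C fs vt \<sigma> i (z - x))}" by blast
  then show ?thesis unfolding e by (rule open_INT[OF finite_lessThan])
qed

lemma sg_div: "a \<noteq> 0 \<Longrightarrow> sg (e \<longleftrightarrow> 0 < a) (g / a) \<longleftrightarrow> sg e g"
  unfolding sg_def by (cases e; cases "0 < a") (auto simp: divide_nonneg_pos divide_nonpos_pos
      divide_nonneg_neg divide_nonpos_neg zero_le_divide_iff divide_le_0_iff)

lemma ssg_div: "a \<noteq> 0 \<Longrightarrow> ssg (e \<longleftrightarrow> 0 < a) (g / a) \<longleftrightarrow> ssg e g"
  unfolding ssg_def by (cases e; cases "0 < a") (auto simp: zero_less_divide_iff divide_less_0_iff)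

lemma level_facts:
  fixes fs :: "('a::euclidean_space \<Rightarrow> real) list" and x :: 'a and \<sigma> :: "bool list"
  assumes lin: "\<forall>f\<in>set fs. linear f" and ok: "tree_ok fs vt" and m: "length \<sigma> < length fs"
    and g_def: "g = (\<lambda>z. (fs!length \<sigma>) (rp fs vt x \<sigma> z))"
  shows "(fs!length \<sigma>) (vt \<sigma>) \<noteq> 0" "\<forall>j<length \<sigma>. (fs!j) (vt \<sigma>) = 0"
    "C fs vt \<sigma> (length \<sigma>) (z - x) = g z / (fs!length \<sigma>) (vt \<sigma>)"
    "yc fs vt x (\<sigma>@[b]) = yc fs vt x \<sigma> \<inter> {z. sg b (g z / (fs!length \<sigma>) (vt \<sigma>))}"
    "ysc fs vt x (\<sigma>@[b]) = ysc fs vt x \<sigma> \<inter> {z. ssg b (g z / (fs!length \<sigma>) (vt \<sigma>))}"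
    "rp fs vt x (\<sigma>@[b]) z = rp fs vt x \<sigma> z - (g z / (fs!length \<sigma>) (vt \<sigma>)) *\<^sub>R vt \<sigma>"
    "continuous_on UNIV g"
    "\<forall>j<length \<sigma>. (fs!j) h = 0 \<Longrightarrow> rp fs vt x \<sigma> (z + h) = rp fs vt x \<sigma> z + h"
    "\<forall>j<length \<sigma>. (fs!j) h = 0 \<Longrightarrow> g (z + h) = g z + (fs!length \<sigma>) h"
    "\<forall>j<length \<sigma>. (fs!j) h = 0 \<Longrightarrow> z \<in> yc fs vt x \<sigma> \<longleftrightarrow> z + h \<in> yc fs vt x \<sigma>"
    "\<forall>j<length \<sigma>. (fs!j) h = 0 \<Longrightarrow> z \<in> ysc fs vt x \<sigma> \<longleftrightarrow> z + h \<in> ysc fs vt x \<sigma>"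
proof -
  let ?m = "length \<sigma>" and ?a = "(fs!length \<sigma>) (vt \<sigma>)"
  show a: "?a \<noteq> 0" and "\<forall>j<length \<sigma>. (fs!j) (vt \<sigma>) = 0" using ok m unfolding tree_ok_def by auto
  show Ce: "C fs vt \<sigma> ?m (z - x) = g z / ?a" for z unfolding C_def g_def rp_def by simp
  show "yc fs vt x (\<sigma>@[b]) = yc fs vt x \<sigma> \<inter> {z. sg b (g z / ?a)}" unfolding yc_snoc[of fs vt x \<sigma> b] Ce ..
  show "ysc fs vt x (\<sigma>@[b]) = ysc fs vt x \<sigma> \<inter> {z. ssg b (g z / ?a)}" unfolding ysc_snoc[of fs vt x \<sigma> b] Ce ..
  show "rp fs vt x (\<sigma>@[b]) z = rp fs vt x \<sigma> z - (g z / ?a) *\<^sub>R vt \<sigma>"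
    unfolding rp_def using R_snoc[of ?m \<sigma> fs vt b] Ce[of z] by (simp add: R_Suc C_snoc g_def rp_def)
  have "g z = ?a * C fs vt \<sigma> ?m (z - x)" for z using Ce a by simp
  then have "g = (\<lambda>z. ?a * C fs vt \<sigma> ?m (z - x))" by auto
  moreover have "continuous_on UNIV (\<lambda>z. C fs vt \<sigma> ?m (z - x))" using lin m by (rule C_cont)
  ultimately show "continuous_on UNIV g" by (simp add: continuous_on_mult_left)
  assume h: "\<forall>j<length \<sigma>. (fs!j) h = 0"
  have e: "z + h - x = (z - x) + h" by (simp add: algebra_simps)
  show r: "rp fs vt x \<sigma> (z + h) = rp fs vt x \<sigma> z + h"
    unfolding rp_def e using R_shift[OF lin _ h, of ?m] m by simp
  have lf: "linear (fs!?m)" using lin m by simp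
  show "g (z + h) = g z + (fs!length \<sigma>) h" unfolding g_def r using lf by (simp add: linear_add)
  show "z \<in> yc fs vt x \<sigma> \<longleftrightarrow> z + h \<in> yc fs vt x \<sigma>" using yc_shift(1)[OF lin _ h] m by simp
  show "z \<in> ysc fs vt x \<sigma> \<longleftrightarrow> z + h \<in> ysc fs vt x \<sigma>" using yc_shift(2)[OF lin _ h] m by simp
qed


lemma ssg_sg: "ssg e t \<Longrightarrow> sg e t"
  unfolding sg_def ssg_def by (auto split: if_splits)

lemma rec_step:
  fixes fs :: "('a::euclidean_space \<Rightarrow> real) list" and x y :: 'a
  assumes lin: "\<forall>f\<in>set fs. linear f" and okx: "tree_ok fs vtx" and oky: "tree_ok fs vty"
  shows "length \<sigma> = m \<Longrightarrow> length \<tau> = m \<Longrightarrow> m \<le> k \<Longrightarrow> k < length fs \<Longrightarrow>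
    yc fs vtx x \<sigma> = yc fs vty y \<tau> \<Longrightarrow> ysc fs vtx x \<sigma> \<noteq> {} \<Longrightarrow>
    (\<forall>z\<in>yc fs vtx x \<sigma>. \<forall>i. m \<le> i \<and> i < k \<longrightarrow> (fs!i) (rp fs vty y \<tau> z - rp fs vtx x \<sigma> z) = 0) \<Longrightarrow>
    (\<forall>z\<in>yc fs vtx x \<sigma>. 0 \<le> (fs!k) (rp fs vty y \<tau> z - rp fs vtx x \<sigma> z)) \<Longrightarrow>
    (\<forall>z\<in>ysc fs vtx x \<sigma>. 0 < (fs!k) (rp fs vty y \<tau> z - rp fs vtx x \<sigma> z)) \<Longrightarrow>
    \<exists>\<sigma>' \<tau>' U. length \<sigma>' = length \<tau>' \<and> length \<sigma>' \<le> Suc k \<and> yc fs vtx x \<sigma>' \<subseteq> yc fs vty y \<tau>' \<and>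
       open U \<and> U \<noteq> {} \<and> U \<subseteq> yc fs vty y \<tau>' - yc fs vtx x \<sigma>'"
proof (induction "k - m" arbitrary: \<sigma> \<tau> m k rule: less_induct)
  case less
  note hyps = less.prems
  have m: "m < length fs" using hyps by simp
  define ax where "ax = (fs!m) (vtx \<sigma>)"
  define ay where "ay = (fs!m) (vty \<tau>)"
  define gx where "gx = (\<lambda>z. (fs!m) (rp fs vtx x \<sigma> z))"
  define gy where "gy = (\<lambda>z. (fs!m) (rp fs vty y \<tau> z))"
  define D where "D = yc fs vtx x \<sigma>"
  note LX = level_facts[OF lin okx _ gx_def[unfolded hyps(1)[symmetric]], unfolded hyps(1), folded ax_def]
  note LY = level_facts[OF lin oky _ gy_def[unfolded hyps(2)[symmetric]], unfolded hyps(2), folded ay_def]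
  have mx: "m < length fs" using m by simp
  have ax: "ax \<noteq> 0" and vx0: "\<forall>j<m. (fs!j) (vtx \<sigma>) = 0" using LX(1,2) mx by auto
  have ay: "ay \<noteq> 0" and vy0: "\<forall>j<m. (fs!j) (vty \<tau>) = 0" using LY(1,2) mx by auto
  have lfm: "linear (fs!m)" using lin m by simp
  have gxy: "gy z = gx z + (fs!m) (rp fs vty y \<tau> z - rp fs vtx x \<sigma> z)" for z
    unfolding gx_def gy_def using lfm by (simp add: linear_diff)
  have vsc: "\<forall>j<m. (fs!j) (t *\<^sub>R vtx \<sigma>) = 0" for t
  proof (intro allI impI)
    fix j assume j: "j < m"
    then have "linear (fs!j)" using lin m by simp
    then show "(fs!j) (t *\<^sub>R vtx \<sigma>) = 0" using vx0 j by (simp add: linear_scale)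
  qed
  have e1: "(fs!m) (t *\<^sub>R vtx \<sigma>) = t * ax" for t using lfm by (simp add: linear_scale ax_def)
  have shx: "gx (z + t *\<^sub>R vtx \<sigma>) = gx z + t * ax" for z t
    using LX(9)[OF mx vsc, of z t] unfolding e1 .
  have shy: "gy (z + t *\<^sub>R vtx \<sigma>) = gy z + t * ax" for z t
    using LY(9)[OF mx vsc, of z t] unfolding e1 .
  show ?case
  proof (cases "m = k")
    case True
    define \<sigma>' where "\<sigma>' = \<sigma>@[0 < ax]"
    define \<tau>' where "\<tau>' = \<tau>@[0 < ay]"
    have ycx: "yc fs vtx x \<sigma>' = D \<inter> {z. 0 \<le> gx z}"
      unfolding \<sigma>'_def LX(4)[OF mx] D_def using sg_div[OF ax, of True] by (auto simp: sg_def)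
    have ycy: "yc fs vty y \<tau>' = D \<inter> {z. 0 \<le> gy z}"
      unfolding \<tau>'_def LY(4)[OF mx] D_def hyps(5) using sg_div[OF ay, of True] by (auto simp: sg_def)
    have sub: "yc fs vtx x \<sigma>' \<subseteq> yc fs vty y \<tau>'"
      unfolding ycx ycy using hyps(8) gxy True D_def by fastforce
    define U where "U = ysc fs vtx x \<sigma> \<inter> {z. gx z < 0} \<inter> {z. 0 < gy z}"
    have "open (ysc fs vtx x \<sigma>)" using lin m hyps(1) by (intro ysc_open) auto
    moreover have "open {z. gx z < 0}" using open_Collect_less[OF LX(7)[OF mx] continuous_on_const] by simp
    moreover have "open {z. 0 < gy z}" using open_Collect_less[OF continuous_on_const LY(7)[OF mx]] by simp
    ultimately have oU: "open U" unfolding U_def by (intro open_Int)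
    obtain z1 where z1: "z1 \<in> ysc fs vtx x \<sigma>" using hyps(6) by auto
    define z0 where "z0 = z1 + (- (gx z1 / ax)) *\<^sub>R vtx \<sigma>"
    have z0: "z0 \<in> ysc fs vtx x \<sigma>" using LX(11)[OF mx vsc] z1 unfolding z0_def by blast
    have gz0: "gx z0 = 0" unfolding z0_def shx using ax by simp
    have "gy z0 > 0" using gxy[of z0] gz0 hyps(9) z0 True by simp
    define z2 where "z2 = z0 + (- (gy z0 / (2 * ax))) *\<^sub>R vtx \<sigma>"
    have z2: "z2 \<in> ysc fs vtx x \<sigma>" using LX(11)[OF mx vsc] z0 unfolding z2_def by blast
    have vy: "\<forall>j<m. (fs!j) (t *\<^sub>R vtx \<sigma>) = 0" for t using vsc by blast
    have "gx z2 = - gy z0 / 2" unfolding z2_def shx gz0 using ax by simp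
    moreover have "gy z2 = gy z0 / 2" unfolding z2_def shy using ax by simp
    ultimately have "z2 \<in> U" unfolding U_def using z2 \<open>gy z0 > 0\<close> by simp
    then have nU: "U \<noteq> {}" by auto
    have "U \<subseteq> yc fs vty y \<tau>' - yc fs vtx x \<sigma>'"
      unfolding U_def ycx ycy D_def using ysc_sub by fastforce
    then show ?thesis using sub oU nU hyps(1,2) True unfolding \<sigma>'_def \<tau>'_def
      by (intro exI[of _ \<sigma>'] exI[of _ \<tau>'] exI[of _ U]) (auto simp: \<sigma>'_def \<tau>'_def)
  next
    case False
    then have mk: "m < k" using hyps(3) by simp
    have geq: "z \<in> D \<Longrightarrow> gy z = gx z" for z using gxy[of z] hyps(7) mk D_def by auto
    define \<delta> where "\<delta> = (1 / ax) *\<^sub>R vtx \<sigma> - (1 / ay) *\<^sub>R vty \<tau>"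
    have snew: "rp fs vty y (\<tau>@[b']) z - rp fs vtx x (\<sigma>@[b]) z
        = (rp fs vty y \<tau> z - rp fs vtx x \<sigma> z) + gx z *\<^sub>R \<delta>" if "z \<in> D" for z b b'
      unfolding LX(6)[OF mx] LY(6)[OF mx] geq[OF that] \<delta>_def by (simp add: algebra_simps)
    obtain e k' where k': "m < k'" "k' \<le> k" and P2: "\<forall>i. m < i \<and> i < k' \<longrightarrow> (fs!i) \<delta> = 0"
      and E1: "\<forall>t. sg e t \<longrightarrow> 0 \<le> t * (fs!k') \<delta>"
      and E2: "k' < k \<longrightarrow> (\<forall>t. ssg e t \<longrightarrow> 0 < t * (fs!k') \<delta>)"
    proof (cases "\<exists>i. m < i \<and> i \<le> k \<and> (fs!i) \<delta> \<noteq> 0")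
      case True
      define i0 where "i0 = (LEAST i. m < i \<and> i \<le> k \<and> (fs!i) \<delta> \<noteq> 0)"
      have i0: "m < i0 \<and> i0 \<le> k \<and> (fs!i0) \<delta> \<noteq> 0" unfolding i0_def using True by (rule LeastI_ex)
      have "\<forall>i. m < i \<and> i < i0 \<longrightarrow> (fs!i) \<delta> = 0"
      proof (intro allI impI)
        fix i assume i: "m < i \<and> i < i0"
        have "\<not> (m < i \<and> i \<le> k \<and> (fs!i) \<delta> \<noteq> 0)"
          using not_less_Least[of i "\<lambda>i. m < i \<and> i \<le> k \<and> (fs!i) \<delta> \<noteq> 0"] i unfolding i0_def by blast
        then show "(fs!i) \<delta> = 0" using i i0 by simp
      qed
      moreover have "\<forall>t. sg (0 < (fs!i0) \<delta>) t \<longrightarrow> 0 \<le> t * (fs!i0) \<delta>"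
        unfolding sg_def by (simp add: zero_le_mult_iff)
      moreover have "\<forall>t. ssg (0 < (fs!i0) \<delta>) t \<longrightarrow> 0 < t * (fs!i0) \<delta>"
        using i0 unfolding ssg_def by (simp add: zero_less_mult_iff)
      ultimately show ?thesis using that[of i0 "0 < (fs!i0) \<delta>"] i0 by blast
    next
      case False
      then show ?thesis using that[of k True] mk by auto
    qed
    define \<sigma>' where "\<sigma>' = \<sigma>@[e \<longleftrightarrow> 0 < ax]"
    define \<tau>' where "\<tau>' = \<tau>@[e \<longleftrightarrow> 0 < ay]"
    have ycx: "yc fs vtx x \<sigma>' = D \<inter> {z. sg e (gx z)}"
      unfolding \<sigma>'_def LX(4)[OF mx] D_def using sg_div[OF ax, of e] by auto
    have ycy: "yc fs vty y \<tau>' = D \<inter> {z. sg e (gx z)}"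
      unfolding \<tau>'_def LY(4)[OF mx] hyps(5)[symmetric] using sg_div[OF ay, of e] geq D_def by auto
    have yscx: "ysc fs vtx x \<sigma>' = ysc fs vtx x \<sigma> \<inter> {z. ssg e (gx z)}"
      unfolding \<sigma>'_def LX(5)[OF mx] using ssg_div[OF ax, of e] by auto
    obtain z1 where z1: "z1 \<in> ysc fs vtx x \<sigma>" using hyps(6) by auto
    define t where "t = ((if e then 1 else -1) - gx z1) / ax"
    have zt: "z1 + t *\<^sub>R vtx \<sigma> \<in> ysc fs vtx x \<sigma>" using LX(11)[OF mx vsc] z1 by blast
    have "gx (z1 + t *\<^sub>R vtx \<sigma>) = (if e then 1 else -1)"
      unfolding shx using ax unfolding t_def by simp
    then have ne: "ysc fs vtx x \<sigma>' \<noteq> {}" unfolding yscx using zt by (auto simp: ssg_def)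
    have lfi: "linear (fs!i)" if "i < length fs" for i using lin that by simp
    have sl: "(fs!i) (rp fs vty y \<tau>' z - rp fs vtx x \<sigma>' z) =
        (fs!i) (rp fs vty y \<tau> z - rp fs vtx x \<sigma> z) + gx z * (fs!i) \<delta>" if "z \<in> D" "i < length fs" for z i
      unfolding \<sigma>'_def \<tau>'_def snew[OF that(1)] using lfi[OF that(2)] by (simp add: linear_add linear_scale)
    have kn: "k' < length fs" using k' hyps(4) by simp
    have H1: "\<forall>z\<in>yc fs vtx x \<sigma>'. \<forall>i. Suc m \<le> i \<and> i < k' \<longrightarrow> (fs!i) (rp fs vty y \<tau>' z - rp fs vtx x \<sigma>' z) = 0"
    proof (intro ballI allI impI)
      fix z i assume z: "z \<in> yc fs vtx x \<sigma>'" and i: "Suc m \<le> i \<and> i < k'"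
      then have zD: "z \<in> D" unfolding ycx by simp
      show "(fs!i) (rp fs vty y \<tau>' z - rp fs vtx x \<sigma>' z) = 0"
        using sl[OF zD, of i] i k' kn P2 hyps(7) zD D_def by simp
    qed
    have H2: "\<forall>z\<in>yc fs vtx x \<sigma>'. 0 \<le> (fs!k') (rp fs vty y \<tau>' z - rp fs vtx x \<sigma>' z)"
    proof
      fix z assume z: "z \<in> yc fs vtx x \<sigma>'"
      then have zD: "z \<in> D" and se: "sg e (gx z)" unfolding ycx by auto
      have a: "0 \<le> gx z * (fs!k') \<delta>" using E1 se by blast
      have "0 \<le> (fs!k') (rp fs vty y \<tau> z - rp fs vtx x \<sigma> z)"
      proof (cases "k' < k")
        case True then show ?thesis using hyps(7) zD D_def k' by auto
      next
        case False then show ?thesis using hyps(8) zD D_def k' by auto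
      qed
      then show "0 \<le> (fs!k') (rp fs vty y \<tau>' z - rp fs vtx x \<sigma>' z)" using sl[OF zD kn] a by simp
    qed
    have H3: "\<forall>z\<in>ysc fs vtx x \<sigma>'. 0 < (fs!k') (rp fs vty y \<tau>' z - rp fs vtx x \<sigma>' z)"
    proof
      fix z assume z: "z \<in> ysc fs vtx x \<sigma>'"
      then have zs: "z \<in> ysc fs vtx x \<sigma>" and se: "ssg e (gx z)" unfolding yscx by auto
      have zD: "z \<in> D" using zs ysc_sub D_def by blast
      show "0 < (fs!k') (rp fs vty y \<tau>' z - rp fs vtx x \<sigma>' z)"
      proof (cases "k' < k")
        case True
        then have "0 < gx z * (fs!k') \<delta>" using E2 se by blast
        moreover have "(fs!k') (rp fs vty y \<tau> z - rp fs vtx x \<sigma> z) = 0" using hyps(7) zD D_def k' True by auto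
        ultimately show ?thesis using sl[OF zD kn] by simp
      next
        case False
        then have kk: "k' = k" using k' by simp
        have "0 \<le> gx z * (fs!k') \<delta>" using E1 ssg_sg[OF se] by blast
        moreover have "0 < (fs!k') (rp fs vty y \<tau> z - rp fs vtx x \<sigma> z)" using hyps(9) zs kk by auto
        ultimately show ?thesis using sl[OF zD kn] by simp
      qed
    qed
    have len: "length \<sigma>' = Suc m" "length \<tau>' = Suc m" unfolding \<sigma>'_def \<tau>'_def using hyps(1,2) by auto
    have eqc: "yc fs vtx x \<sigma>' = yc fs vty y \<tau>'" using ycx ycy by simp
    have lt: "k' - Suc m < k - m" using k' by simp
    have "\<exists>\<sigma>'' \<tau>'' U. length \<sigma>'' = length \<tau>'' \<and> length \<sigma>'' \<le> Suc k' \<and>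
      yc fs vtx x \<sigma>'' \<subseteq> yc fs vty y \<tau>'' \<and> open U \<and> U \<noteq> {} \<and> U \<subseteq> yc fs vty y \<tau>'' - yc fs vtx x \<sigma>''"
      by (rule less.hyps[OF lt len _ kn eqc ne H1 H2 H3]) (use k' in simp)
    then obtain \<sigma>'' \<tau>'' U where "length \<sigma>'' = length \<tau>''" "length \<sigma>'' \<le> Suc k'"
      "yc fs vtx x \<sigma>'' \<subseteq> yc fs vty y \<tau>''" "open U" "U \<noteq> {}" "U \<subseteq> yc fs vty y \<tau>'' - yc fs vtx x \<sigma>''"
      by blast
    then show ?thesis using k' by (intro exI[of _ \<sigma>''] exI[of _ \<tau>''] exI[of _ U]) auto
  qed
qed



lemma C_formula:
  fixes fs :: "('a::real_vector \<Rightarrow> real) list"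
  assumes "linear (fs!i)"
  shows "C fs vt \<tau> i h = ((fs!i) h - (\<Sum>j<i. C fs vt \<tau> j h * (fs!i) (vt (take j \<tau>)))) / (fs!i) (vt (take i \<tau>))"
proof -
  have "C fs vt \<tau> i h = (fs!i) (R fs vt \<tau> i h) / (fs!i) (vt (take i \<tau>))" by (simp only: C_def)
  also have "(fs!i) (R fs vt \<tau> i h) = (fs!i) h - (\<Sum>j<i. C fs vt \<tau> j h * (fs!i) (vt (take j \<tau>)))"
    by (subst R_decomp) (use assms in \<open>simp add: linear_diff linear_sum linear_scale\<close>)
  finally show ?thesis .
qed

lemma yc_coord_sigma:
  fixes L :: "('a::euclidean_space \<Rightarrow> real) list"
  assumes aff: "\<forall>l\<in>set L. affine_form l" and k: "length \<tau> \<le> k" "k \<le> length L"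
  shows "yc (map lin L) vt y \<tau> \<in> coord_sigma L k"
proof -
  define G where "G = {(L!i) -` B | i B. i < k \<and> B \<in> sets borel}"
  define M where "M = sigma (UNIV::'a set) G"
  have GP: "G \<subseteq> Pow UNIV" by auto
  have sM: "sets M = coord_sigma L k" unfolding M_def coord_sigma_def G_def
    by (rule sets_measure_of) blast
  have spM: "space M = UNIV" unfolding M_def by (rule space_measure_of[OF GP])
  have Li: "(L!j) \<in> borel_measurable M" if "j < k" for j
  proof (rule measurableI)
    fix A :: "real set" assume "A \<in> sets borel"
    then have "(L!j) -` A \<in> G" using that unfolding G_def by blast
    then have "(L!j) -` A \<in> sigma_sets UNIV G" by (rule sigma_sets.Basic)
    then show "(L!j) -` A \<inter> space M \<in> sets M" unfolding spM unfolding M_def sets_measure_of[OF GP] by simp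
  qed simp
  have Cm: "(\<lambda>z. C (map lin L) vt \<tau> i (z - y)) \<in> borel_measurable M" if "i < length \<tau>" for i
    using that
  proof (induction i rule: less_induct)
    case (less i)
    have ik: "i < k" "i < length L" using less.prems k by auto
    have al: "affine_form (L!i)" using aff ik by simp
    have "linear (map lin L ! i)" using affine_lin(1)[OF al] ik by simp
    note F = C_formula[OF this]
    have e: "(map lin L ! i) (z - y) = (L!i) z - (L!i) y" for z
      using affine_lin(4)[OF al] ik by simp
    have "(\<lambda>z. C (map lin L) vt \<tau> i (z - y)) = (\<lambda>z. ((L!i) z - (L!i) y - (\<Sum>j<i. C (map lin L) vt \<tau> j (z - y) * (map lin L ! i) (vt (take j \<tau>)))) / (map lin L ! i) (vt (take i \<tau>)))"
      unfolding F e by simp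
    moreover have "(\<lambda>z. ((L!i) z - (L!i) y - (\<Sum>j<i. C (map lin L) vt \<tau> j (z - y) * (map lin L ! i) (vt (take j \<tau>)))) / (map lin L ! i) (vt (take i \<tau>))) \<in> borel_measurable M"
    proof -
      have s: "(\<lambda>z. \<Sum>j<i. C (map lin L) vt \<tau> j (z - y) * (map lin L ! i) (vt (take j \<tau>))) \<in> borel_measurable M"
      proof (rule borel_measurable_sum)
        fix j assume "j \<in> {..<i}"
        then have "(\<lambda>z. C (map lin L) vt \<tau> j (z - y)) \<in> borel_measurable M" using less.IH less.prems by simp
        then show "(\<lambda>z. C (map lin L) vt \<tau> j (z - y) * (map lin L ! i) (vt (take j \<tau>))) \<in> borel_measurable M"
          by (rule borel_measurable_times[OF _ borel_measurable_const])
      qed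
      have d: "(\<lambda>z. (L!i) z - (L!i) y) \<in> borel_measurable M"
        by (rule borel_measurable_diff[OF Li[OF ik(1)] borel_measurable_const])
      have "(\<lambda>z. (L!i) z - (L!i) y - (\<Sum>j<i. C (map lin L) vt \<tau> j (z - y) * (map lin L ! i) (vt (take j \<tau>)))) \<in> borel_measurable M"
        by (rule borel_measurable_diff[OF d s])
      then show ?thesis by (rule borel_measurable_divide[OF _ borel_measurable_const])
    qed
    ultimately show ?case by simp
  qed
  have "{z\<in>space M. \<forall>i\<in>{..<length \<tau>}. sg (\<tau>!i) (C (map lin L) vt \<tau> i (z - y))} \<in> sets M"
  proof (rule sets.sets_Collect_finite_All)
    fix i assume i: "i \<in> {..<length \<tau>}"
    have m: "(\<lambda>z. C (map lin L) vt \<tau> i (z - y)) \<in> borel_measurable M" using Cm i by simp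
    show "{z\<in>space M. sg (\<tau>!i) (C (map lin L) vt \<tau> i (z - y))} \<in> sets M"
    proof (cases "\<tau>!i")
      case True then show ?thesis unfolding sg_def
        using borel_measurable_le[OF borel_measurable_const m, of 0] by simp
    next
      case False then show ?thesis unfolding sg_def
        using borel_measurable_le[OF m borel_measurable_const, of 0] by simp
    qed
  qed simp
  moreover have "{z\<in>space M. \<forall>i\<in>{..<length \<tau>}. sg (\<tau>!i) (C (map lin L) vt \<tau> i (z - y))} = yc (map lin L) vt y \<tau>"
    unfolding spM yc_def by auto
  ultimately show ?thesis using sM by simp
qed



lemma two_pow_ennreal: "(2::ennreal)^k = ennreal (2^k)"
  by (metis ennreal_numeral ennreal_power zero_le_numeral)

lemma half_sum: "0 \<le> (r::real) \<Longrightarrow> ennreal r / 2^Suc m + ennreal r / 2^Suc m = ennreal r / 2^m"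
proof -
  assume r: "0 \<le> r"
  have "ennreal r / 2^Suc m + ennreal r / 2^Suc m = ennreal (r / 2^Suc m) + ennreal (r / 2^Suc m)"
    unfolding two_pow_ennreal using r by (simp add: divide_ennreal)
  also have "\<dots> = ennreal (r / 2^m)" using r by (simp flip: ennreal_plus)
  also have "\<dots> = ennreal r / 2^m" unfolding two_pow_ennreal using r by (simp add: divide_ennreal)
  finally show ?thesis .
qed

lemma yc_closed:
  fixes fs :: "('a::euclidean_space \<Rightarrow> real) list"
  assumes "\<forall>f\<in>set fs. linear f" "length \<sigma> \<le> length fs"
  shows "closed (yc fs vt x \<sigma>)"
proof -
  have e: "yc fs vt x \<sigma> = (\<Inter>i\<in>{..<length \<sigma>}. {z. sg (\<sigma>!i) (C fs vt \<sigma> i (z - x))})"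
    unfolding yc_def by auto
  have "closed {z. sg (\<sigma>!i) (C fs vt \<sigma> i (z - x))}" if "i < length \<sigma>" for i
  proof -
    have c: "continuous_on UNIV (\<lambda>z. C fs vt \<sigma> i (z - x))" using that assms by (intro C_cont) auto
    show ?thesis
    proof (cases "\<sigma>!i")
      case True then show ?thesis unfolding sg_def
        using closed_Collect_le[OF continuous_on_const c, of 0] by simp
    next
      case False then show ?thesis unfolding sg_def
        using closed_Collect_le[OF c continuous_on_const, of 0] by simp
    qed
  qed
  then have "\<forall>i\<in>{..<length \<sigma>}. closed {z. sg (\<sigma>!i) (C fs vt \<sigma> i (z - x))}" by blast
  then show ?thesis unfolding e by (rule closed_INT)
qed

lemma cone_measure:
  fixes \<mu> :: "'a::euclidean_space measure"
  assumes M: "\<mu> \<in> meas_M" and lin: "\<forall>f\<in>set fs. linear f" and ok: "tree_ok fs vt"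
    and eq: "\<forall>\<sigma>. length \<sigma> = length fs \<longrightarrow> emeasure \<mu> (yc fs vt x \<sigma>) = emeasure \<mu> UNIV / 2^length fs"
  shows "length \<sigma> \<le> length fs \<Longrightarrow> emeasure \<mu> (yc fs vt x \<sigma>) = emeasure \<mu> UNIV / 2^length \<sigma>"
proof (induction "length fs - length \<sigma>" arbitrary: \<sigma>)
  case 0
  then show ?case using eq by simp
next
  case (Suc d)
  let ?m = "length \<sigma>"
  have m: "?m < length fs" using Suc by simp
  have sets: "sets \<mu> = sets borel" and fin: "finite_measure \<mu>" and hyp: "\<forall>a b. a \<noteq> 0 \<longrightarrow> emeasure \<mu> {z. a \<bullet> z = b} = 0"
    using M unfolding meas_M_def by auto
  have IH: "emeasure \<mu> (yc fs vt x (\<sigma>@[b])) = emeasure \<mu> UNIV / 2^Suc ?m" for b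
    using Suc(1)[of "\<sigma>@[b]"] Suc(2,3) by simp
  have meas: "yc fs vt x \<tau> \<in> sets \<mu>" if "length \<tau> \<le> length fs" for \<tau>
    using yc_closed[OF lin that] sets by simp
  let ?\<phi> = "C fs vt \<sigma> ?m"
  have lphi: "linear ?\<phi>" using lin m by (rule C_lin)
  define a where "a = (\<Sum>b\<in>Basis. ?\<phi> b *\<^sub>R b)"
  have phia: "?\<phi> z = a \<bullet> z" for z unfolding a_def by (rule lin_repr[OF lphi])
  have "?\<phi> (vt \<sigma>) = 1" using ok m unfolding tree_ok_def by (intro C_self) auto
  then have a0: "a \<noteq> 0" using phia[of "vt \<sigma>"] by auto
  have un: "yc fs vt x \<sigma> = yc fs vt x (\<sigma>@[True]) \<union> yc fs vt x (\<sigma>@[False])"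
    unfolding yc_snoc by (auto simp: sg_def)
  have int: "yc fs vt x (\<sigma>@[True]) \<inter> yc fs vt x (\<sigma>@[False]) \<subseteq> {z. a \<bullet> z = a \<bullet> x}"
  proof
    fix z assume "z \<in> yc fs vt x (\<sigma>@[True]) \<inter> yc fs vt x (\<sigma>@[False])"
    then have "?\<phi> (z - x) = 0" unfolding yc_snoc by (auto simp: sg_def)
    then show "z \<in> {z. a \<bullet> z = a \<bullet> x}" using phia[of "z - x"] by (simp add: inner_diff_right)
  qed
  have hc: "closed {z. a \<bullet> z = a \<bullet> x}" by (rule closed_hyperplane)
  have "{z. a \<bullet> z = a \<bullet> x} \<in> null_sets \<mu>"
    unfolding null_sets_def using hyp a0 sets borel_closed[OF hc] by blast
  moreover have "yc fs vt x (\<sigma>@[True]) \<inter> yc fs vt x (\<sigma>@[False]) \<in> sets \<mu>"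
    using meas[of "\<sigma>@[True]"] meas[of "\<sigma>@[False]"] m by simp
  ultimately have nul: "yc fs vt x (\<sigma>@[True]) \<inter> yc fs vt x (\<sigma>@[False]) \<in> null_sets \<mu>"
    using int by (rule null_sets_subset)
  have "emeasure \<mu> (yc fs vt x \<sigma>) = emeasure \<mu> (yc fs vt x (\<sigma>@[True])) + emeasure \<mu> (yc fs vt x (\<sigma>@[False]))"
    unfolding un using meas[of "\<sigma>@[True]"] meas[of "\<sigma>@[False]"] m nul by (intro emeasure_Un') simp_all
  also have "\<dots> = emeasure \<mu> UNIV / 2^Suc ?m + emeasure \<mu> UNIV / 2^Suc ?m" using IH by simp
  also have "\<dots> = emeasure \<mu> UNIV / 2^?m"
  proof -
    have "emeasure \<mu> UNIV = ennreal (measure \<mu> UNIV)"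
      using fin by (simp add: finite_measure.emeasure_eq_measure)
    then show ?thesis using half_sum[of "measure \<mu> UNIV" ?m] by simp
  qed
  finally show ?case .
qed


lemma center_tree:
  fixes L :: "('a::euclidean_space \<Rightarrow> real) list" and \<mu> :: "'a measure"
  assumes cs: "coord_system L" and M: "\<mu> \<in> meas_M" and c: "yy_center \<mu> L x"
  shows "\<exists>vt. tree_ok (map lin L) vt \<and>
    (\<forall>\<sigma>. length \<sigma> \<le> length L \<longrightarrow> emeasure \<mu> (yc (map lin L) vt x \<sigma>) = emeasure \<mu> UNIV / 2^length \<sigma>)"
proof -
  have len: "length L = DIM('a)" and aff: "\<forall>l\<in>set L. affine_form l"
    and bij: "bij_betw (\<lambda>z. map (\<lambda>l. l z) L) UNIV {xs. length xs = DIM('a)}"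
    using cs unfolding coord_system_def by auto
  have inj: "\<forall>z. (\<forall>l\<in>set ([]@L). l z = l x) \<longrightarrow> z = x"
  proof (intro allI impI)
    fix z assume "\<forall>l\<in>set ([]@L). l z = l x"
    then have "map (\<lambda>l. l z) L = map (\<lambda>l. l x) L" by simp
    then show "z = x" using bij unfolding bij_betw_def inj_on_def by blast
  qed
  obtain P where P: "yy_adapted UNIV L P x" "yy_equipartition \<mu> P" using c unfolding yy_center_def by blast
  have S: "UNIV = {z. \<forall>l\<in>set []. l z = l x}" by simp
  obtain vt where vt: "P = piece UNIV (map lin L) vt x ` {\<sigma>. length \<sigma> = length L}"
    "\<forall>\<sigma>. length \<sigma> < length L \<longrightarrow> (\<forall>l\<in>set []. lin l (vt \<sigma>) = 0) \<and>
        (\<forall>i<length \<sigma>. lin (L!i) (vt \<sigma>) = 0) \<and> lin (L!length \<sigma>) (vt \<sigma>) \<noteq> 0"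
    using yy_struct[OF P(1) S _ inj] aff by auto
  have ok: "tree_ok (map lin L) vt" unfolding tree_ok_def using vt(2) by auto
  have pc: "piece UNIV fs vt x \<sigma> = yc fs vt x \<sigma>" for fs \<sigma> unfolding piece_def yc_def by simp
  have lin: "\<forall>f\<in>set (map lin L). linear f" using aff affine_lin(1) by auto
  have eq: "\<forall>\<sigma>. length \<sigma> = length (map lin L) \<longrightarrow> emeasure \<mu> (yc (map lin L) vt x \<sigma>) = emeasure \<mu> UNIV / 2^length (map lin L)"
  proof (intro allI impI)
    fix \<sigma> :: "bool list" assume "length \<sigma> = length (map lin L)"
    then have "yc (map lin L) vt x \<sigma> \<in> P" unfolding vt(1) pc by simp
    then show "emeasure \<mu> (yc (map lin L) vt x \<sigma>) = emeasure \<mu> UNIV / 2^length (map lin L)"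
      using P(2) len unfolding yy_equipartition_def by simp
  qed
  show ?thesis using cone_measure[OF M lin ok eq] ok by auto
qed

lemma contra:
  fixes L :: "('a::euclidean_space \<Rightarrow> real) list" and \<mu> \<nu> :: "'a measure"
  assumes aff: "\<forall>l\<in>set L. affine_form l" and \<mu>: "\<mu> \<in> meas_Mstar"
    and agree: "\<forall>A\<in>coord_sigma L k. emeasure \<mu> A = emeasure \<nu> A" and kL: "k \<le> length L"
    and okx: "tree_ok (map lin L) vtx" and oky: "tree_ok (map lin L) vty"
    and cmx: "\<forall>\<sigma>. length \<sigma> \<le> length L \<longrightarrow> emeasure \<mu> (yc (map lin L) vtx x \<sigma>) = emeasure \<mu> UNIV / 2^length \<sigma>"
    and cmy: "\<forall>\<sigma>. length \<sigma> \<le> length L \<longrightarrow> emeasure \<nu> (yc (map lin L) vty y \<sigma>) = emeasure \<nu> UNIV / 2^length \<sigma>"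
    and jj: "jj < k" "\<forall>i<jj. (L!i) x = (L!i) y" "(L!jj) y < (L!jj) x"
  shows False
proof -
  let ?fs = "map lin L"
  have lin: "\<forall>f\<in>set ?fs. linear f" using aff affine_lin(1) by auto
  have diff: "(?fs!i) (rp ?fs vty y [] z - rp ?fs vtx x [] z) = (L!i) x - (L!i) y" if "i < length L" for i z
  proof -
    have "rp ?fs vty y [] z - rp ?fs vtx x [] z = x - y" by (simp add: rp_def)
    then show ?thesis using affine_lin(4)[of "L!i" x y] aff that by simp
  qed
  have ycU: "yc ?fs vt w [] = UNIV" for vt w by (simp add: yc_def)
  have yscU: "ysc ?fs vt w [] = UNIV" for vt w by (simp add: ysc_def)
  have "\<exists>\<sigma>' \<tau>' U. length \<sigma>' = length \<tau>' \<and> length \<sigma>' \<le> Suc jj \<and> yc ?fs vtx x \<sigma>' \<subseteq> yc ?fs vty y \<tau>' \<and>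
       open U \<and> U \<noteq> {} \<and> U \<subseteq> yc ?fs vty y \<tau>' - yc ?fs vtx x \<sigma>'"
    by (rule rec_step[OF lin okx oky, of "[]" 0 "[]" jj]) (use jj kL diff in \<open>auto simp: ycU yscU\<close>)
  then obtain \<sigma>' \<tau>' U where st: "length \<sigma>' = length \<tau>'" "length \<sigma>' \<le> Suc jj"
    "yc ?fs vtx x \<sigma>' \<subseteq> yc ?fs vty y \<tau>'" "open U" "U \<noteq> {}" "U \<subseteq> yc ?fs vty y \<tau>' - yc ?fs vtx x \<sigma>'"
    by blast
  have jk: "length \<tau>' \<le> k" using st jj by simp
  have sets: "sets \<mu> = sets borel" and fin: "finite_measure \<mu>" and pos: "emeasure \<mu> U > 0"
    using \<mu> st unfolding meas_Mstar_def meas_M_def by auto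
  have inS: "yc ?fs vty y \<tau>' \<in> coord_sigma L k" using yc_coord_sigma[OF aff jk kL] .
  have "UNIV \<in> coord_sigma L k" unfolding coord_sigma_def by (rule sigma_sets_top)
  then have UU: "emeasure \<mu> UNIV = emeasure \<nu> UNIV" using agree by simp
  have "emeasure \<mu> (yc ?fs vty y \<tau>') = emeasure \<nu> (yc ?fs vty y \<tau>')" using agree inS by simp
  also have "\<dots> = emeasure \<nu> UNIV / 2^length \<tau>'" using cmy jk kL by simp
  also have "\<dots> = emeasure \<mu> (yc ?fs vtx x \<sigma>')" using cmx st(1) jk kL UU by simp
  finally have eqm: "emeasure \<mu> (yc ?fs vty y \<tau>') = emeasure \<mu> (yc ?fs vtx x \<sigma>')" .
  have mA: "yc ?fs vtx x \<sigma>' \<in> sets \<mu>" using yc_closed[OF lin] st jk kL sets by simp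
  have mB: "yc ?fs vty y \<tau>' \<in> sets \<mu>" using yc_closed[OF lin] st jk kL sets by simp
  have mU: "U \<in> sets \<mu>" using st(4) sets by simp
  have "emeasure \<mu> (yc ?fs vtx x \<sigma>') + emeasure \<mu> U = emeasure \<mu> (yc ?fs vtx x \<sigma>' \<union> U)"
    using st(6) mA mU by (intro plus_emeasure) auto
  also have "\<dots> \<le> emeasure \<mu> (yc ?fs vty y \<tau>')" using st(3,6) mB by (intro emeasure_mono) auto
  also have "\<dots> = emeasure \<mu> (yc ?fs vtx x \<sigma>')" by (rule eqm)
  finally have le: "emeasure \<mu> (yc ?fs vtx x \<sigma>') + emeasure \<mu> U \<le> emeasure \<mu> (yc ?fs vtx x \<sigma>')" .
  have "emeasure \<mu> (yc ?fs vtx x \<sigma>') \<noteq> \<infinity>" using fin by (simp add: finite_measure.emeasure_finite)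
  then show False using le pos
    by (metis add.right_neutral add_left_mono ennreal_add_left_cancel_le not_le)
qed



theorem proposition10:
  fixes L :: "('a::euclidean_space \<Rightarrow> real) list"
  assumes "coord_system L"
  shows "(\<forall>\<mu> x y. \<mu> \<in> meas_Mstar \<and> yy_center \<mu> L x \<and> yy_center \<mu> L y \<longrightarrow> x = y) \<and>
         (\<forall>k \<mu> \<nu> x y. 1 \<le> k \<and> k \<le> DIM('a) \<and> \<mu> \<in> meas_Mstar \<and> \<nu> \<in> meas_Mstar \<and>
            (\<forall>A\<in>coord_sigma L k. emeasure \<mu> A = emeasure \<nu> A) \<and>
            yy_center \<mu> L x \<and> yy_center \<nu> L y
            \<longrightarrow> (\<forall>i<k. (L ! i) x = (L ! i) y))"
proof -
  have len: "length L = DIM('a)" and aff: "\<forall>l\<in>set L. affine_form l"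
    and bij: "bij_betw (\<lambda>z. map (\<lambda>l. l z) L) UNIV {xs. length xs = DIM('a)}"
    using assms unfolding coord_system_def by auto
  have key: "\<forall>i<k. (L ! i) x = (L ! i) y"
    if k: "k \<le> length L" and \<mu>: "\<mu> \<in> meas_Mstar" and \<nu>: "\<nu> \<in> meas_Mstar"
      and agree: "\<forall>A\<in>coord_sigma L k. emeasure \<mu> A = emeasure \<nu> A"
      and cx: "yy_center \<mu> L x" and cy: "yy_center \<nu> L y" for k \<mu> \<nu> x y
  proof (rule ccontr)
    assume "\<not> (\<forall>i<k. (L ! i) x = (L ! i) y)"
    then have ex: "\<exists>i. i < k \<and> (L ! i) x \<noteq> (L ! i) y" by auto
    define k0 where "k0 = (LEAST i. i < k \<and> (L ! i) x \<noteq> (L ! i) y)"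
    have k0: "k0 < k \<and> (L ! k0) x \<noteq> (L ! k0) y" unfolding k0_def using ex by (rule LeastI_ex)
    have below: "\<forall>i<k0. (L!i) x = (L!i) y"
    proof (intro allI impI)
      fix i assume i: "i < k0"
      have "\<not> (i < k \<and> (L ! i) x \<noteq> (L ! i) y)"
        using not_less_Least[of i "\<lambda>i. i < k \<and> (L ! i) x \<noteq> (L ! i) y"] i unfolding k0_def by blast
      then show "(L!i) x = (L!i) y" using i k0 by simp
    qed
    have \<mu>M: "\<mu> \<in> meas_M" and \<nu>M: "\<nu> \<in> meas_M" using \<mu> \<nu> unfolding meas_Mstar_def by auto
    obtain vtx where vx: "tree_ok (map lin L) vtx"
      "\<forall>\<sigma>. length \<sigma> \<le> length L \<longrightarrow> emeasure \<mu> (yc (map lin L) vtx x \<sigma>) = emeasure \<mu> UNIV / 2^length \<sigma>"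
      using center_tree[OF assms \<mu>M cx] by blast
    obtain vty where vy: "tree_ok (map lin L) vty"
      "\<forall>\<sigma>. length \<sigma> \<le> length L \<longrightarrow> emeasure \<nu> (yc (map lin L) vty y \<sigma>) = emeasure \<nu> UNIV / 2^length \<sigma>"
      using center_tree[OF assms \<nu>M cy] by blast
    show False
    proof (cases "(L!k0) y < (L!k0) x")
      case True
      show False using contra[OF aff \<mu> agree k vx(1) vy(1) vx(2) vy(2), where jj=k0] k0 below True by blast
    next
      case False
      then have lt: "(L!k0) x < (L!k0) y" using k0 by auto
      have agree': "\<forall>A\<in>coord_sigma L k. emeasure \<nu> A = emeasure \<mu> A" using agree by simp
      have below': "\<forall>i<k0. (L!i) y = (L!i) x" using below by simp
      show False using contra[OF aff \<nu> agree' k vy(1) vx(1) vy(2) vx(2), where jj=k0] k0 below' lt by blast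
    qed
  qed
  show ?thesis
  proof (intro conjI allI impI)
    fix \<mu> x y assume h: "\<mu> \<in> meas_Mstar \<and> yy_center \<mu> L x \<and> yy_center \<mu> L y"
    have "\<forall>i<length L. (L ! i) x = (L ! i) y" using key[of "length L" \<mu> \<mu> x y] h by simp
    then have "map (\<lambda>l. l x) L = map (\<lambda>l. l y) L" by (simp add: list_eq_iff_nth_eq)
    then show "x = y" using bij unfolding bij_betw_def inj_on_def by blast
  next
    fix k \<mu> \<nu> x y i
    assume h: "1 \<le> k \<and> k \<le> DIM('a) \<and> \<mu> \<in> meas_Mstar \<and> \<nu> \<in> meas_Mstar \<and>
            (\<forall>A\<in>coord_sigma L k. emeasure \<mu> A = emeasure \<nu> A) \<and> yy_center \<mu> L x \<and> yy_center \<nu> L y"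
    assume i: "i < k"
    show "(L ! i) x = (L ! i) y" using key[of k \<mu> \<nu> x y] len h i by auto
  qed
qed


end
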